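(* Let $U \subset \mathbb{R}^n$ be a relatively compact open subanalytic set and $X = \overline{U} \setminus U$. Let $\pi: \mathbb{R}^n \to \mathbb{R}^{n-1}$ be the standard projection $\pi(x', x_n) = x'$, with $\pi|_X$ finite, and let $\Delta_\pi$ be its discriminant set. Fix $C, \varepsilon > 0$, let $x_0 \in U$, and suppose $\pi$ is $(C, \varepsilon)$-regular at $x_0$ with respect to $X$. Write $x_0' = \pi(x_0)$ and $\mathscr{C} = \{x_0 + \lambda(\eta, 1) : \eta \in \mathbb{R}^{n-1}, |\eta| < \varepsilon,\ \lambda \in \mathbb{R} \setminus \{0\}\}$. Let $\tilde C \ge 1$ be a constant such that $$\operatorname{dist}(x_0, X \setminus \mathscr{C}) \le \tilde C \operatorname{dist}(x_0', \pi(X \setminus \mathscr{C})) \le \tilde C \operatorname{dist}(x_0', \Delta_\pi).$$ Let $U'$ be an open subanalytic subset of $\pi(U) \setminus \Delta_\pi$ such that $x_0' \in U'$ and $$\operatorname{dist}(x_0', \Delta_\pi) \le \tilde C \operatorname{dist}(x_0', \partial U').$$ Let $U_1$ be the member of the cylindrical decomposition of $U \cap \pi^{-1}(U')$ containing $x_0$. Then $$\operatorname{dist}(x_0, X) \le \tilde C^2 \operatorname{dist}(x_0, \partial U_1).$$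
   Context: For an open set $W$, $\partial W = \overline{W} \setminus W$. Let $\operatorname{Reg}(X)$ be the set of points of $X$ where $X$ is locally a real analytic submanifold of dimension $n-1$, and $Z = X \setminus \operatorname{Reg}(X)$; the discriminant set $\Delta_\pi$ is the union of $\pi(Z)$ and the critical values of $\pi|_{\operatorname{Reg}(X)}$. The projection $\pi$ is $(C,\varepsilon)$-regular at $x_0$ with respect to $X$ if: (a) $\pi|_X$ is finite; (b) $X \cap \mathscr{C}$ is empty or a finite disjoint union of sets $\{x_0 + \lambda_i(\eta)(\eta, 1) : |\eta| < \varepsilon\}$ with $\lambda_i$ real analytic nowhere vanishing functions on $\{|\eta| < \varepsilon\}$; (c) $\|\operatorname{grad} \lambda_i(\eta)\| \le C|\lambda_i(\eta)|$ for all $|\eta| < \varepsilon$. Cylindrical decomposition: if $U'_0$ is the connected component of $U'$ containing $x_0'$, then $X \cap \pi^{-1}(U'_0)$ is the union of the graphs of finitely many bounded real analytic functions $\varphi_1 < \dots < \varphi_k$ on $U'_0$, and the member containing $x_0$ is the set $U_1 = \{(x', x_n) : x' \in U'_0,\ \varphi_i(x') < x_n < \varphi_{i+1}(x')\}$ that contains $x_0$. *)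

theory Defs
  imports "HOL-Analysis.Analysis"
begin

definition mindex :: "('a::euclidean_space \<Rightarrow> nat) set" where
  "mindex = {\<alpha>. \<forall>b. b \<notin> Basis \<longrightarrow> \<alpha> b = 0}"

definition monom :: "('a::euclidean_space \<Rightarrow> nat) \<Rightarrow> 'a \<Rightarrow> real" where
  "monom \<alpha> h = (\<Prod>b\<in>Basis. (h \<bullet> b) ^ \<alpha> b)"

definition ranalytic_at :: "('a::euclidean_space \<Rightarrow> real) \<Rightarrow> 'a \<Rightarrow> bool" where
  "ranalytic_at f a \<longleftrightarrow>
     (\<exists>r>0. \<exists>c. \<forall>x\<in>ball a r. ((\<lambda>\<alpha>. c \<alpha> * monom \<alpha> (x - a)) has_sum f x) mindex)"

definition ranalytic_on :: "('a::euclidean_space \<Rightarrow> real) \<Rightarrow> 'a set \<Rightarrow> bool" where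
  "ranalytic_on f S \<longleftrightarrow> (\<forall>a\<in>S. ranalytic_at f a)"

section \<open>The space R^n x R^m, with R^m encoded as nat-indexed vectors supported on {..<m}\<close>

definition cs :: "nat \<Rightarrow> (nat \<Rightarrow> real) set" where
  "cs m = {v. \<forall>i\<ge>m. v i = 0}"

definition pspace :: "nat \<Rightarrow> ('a::euclidean_space \<times> (nat \<Rightarrow> real)) set" where
  "pspace m = UNIV \<times> cs m"

definition pnorm :: "nat \<Rightarrow> 'a::euclidean_space \<times> (nat \<Rightarrow> real) \<Rightarrow> real" where
  "pnorm m p = sqrt ((norm (fst p))\<^sup>2 + (\<Sum>i<m. (snd p i)\<^sup>2))"

definition pmindex :: "nat \<Rightarrow> (('a::euclidean_space \<Rightarrow> nat) \<times> (nat \<Rightarrow> nat)) set" where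
  "pmindex m = {(\<alpha>, \<beta>). \<alpha> \<in> mindex \<and> (\<forall>i\<ge>m. \<beta> i = 0)}"

definition pmonom :: "nat \<Rightarrow> ('a::euclidean_space \<Rightarrow> nat) \<times> (nat \<Rightarrow> nat)
    \<Rightarrow> 'a \<times> (nat \<Rightarrow> real) \<Rightarrow> real" where
  "pmonom m ab q = monom (fst ab) (fst q) * (\<Prod>i<m. (snd q i) ^ (snd ab i))"

definition panalytic_at :: "nat \<Rightarrow> ('a::euclidean_space \<times> (nat \<Rightarrow> real) \<Rightarrow> real)
    \<Rightarrow> 'a \<times> (nat \<Rightarrow> real) \<Rightarrow> bool" where
  "panalytic_at m g p \<longleftrightarrow>
     (\<exists>r>0. \<exists>c. \<forall>q\<in>pspace m. pnorm m (q - p) < r \<longrightarrow>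
        ((\<lambda>ab. c ab * pmonom m ab (q - p)) has_sum g q) (pmindex m))"

definition popen :: "nat \<Rightarrow> ('a::euclidean_space \<times> (nat \<Rightarrow> real)) set \<Rightarrow> bool" where
  "popen m W \<longleftrightarrow> W \<subseteq> pspace m \<and>
     (\<forall>p\<in>W. \<exists>r>0. \<forall>q\<in>pspace m. pnorm m (q - p) < r \<longrightarrow> q \<in> W)"

definition pbounded :: "nat \<Rightarrow> ('a::euclidean_space \<times> (nat \<Rightarrow> real)) set \<Rightarrow> bool" where
  "pbounded m B \<longleftrightarrow> (\<exists>R. \<forall>q\<in>B. pnorm m q \<le> R)"

definition psemianalytic :: "nat \<Rightarrow> ('a::euclidean_space \<times> (nat \<Rightarrow> real)) set \<Rightarrow> bool" where
  "psemianalytic m B \<longleftrightarrow> B \<subseteq> pspace m \<and>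
     (\<forall>p\<in>pspace m. \<exists>W. popen m W \<and> p \<in> W \<and>
        (\<exists>(I::nat) (J::nat) F G.
           (\<forall>i<I. \<forall>j<J. \<forall>q\<in>W. panalytic_at m (F i j) q \<and> panalytic_at m (G i j) q) \<and>
           B \<inter> W = W \<inter> (\<Union>i<I. \<Inter>j<J. {q\<in>W. F i j q = 0 \<and> G i j q > 0})))"

text \<open>Subanalytic subsets of R^n: locally the projection of a relatively compact
  (= bounded) semianalytic subset of R^n x R^m, for some m.\<close>
definition subanalytic :: "'a::euclidean_space set \<Rightarrow> bool" where
  "subanalytic A \<longleftrightarrow>
     (\<forall>x. \<exists>V. open V \<and> x \<in> V \<and>
        (\<exists>m B. psemianalytic m B \<and> pbounded m B \<and> A \<inter> V = fst ` B))"

text \<open>Local analytic defining function of X as a hypersurface (submanifold of codim 1).\<close>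
definition ldf :: "'a set \<Rightarrow> 'a set \<Rightarrow> ('a::euclidean_space \<Rightarrow> real) \<Rightarrow> bool" where
  "ldf X V f \<longleftrightarrow> open V \<and> ranalytic_on f V \<and> X \<inter> V = {q\<in>V. f q = 0} \<and>
     (\<forall>q\<in>X \<inter> V. \<exists>D. (f has_derivative D) (at q) \<and> D \<noteq> (\<lambda>h. 0))"

definition Reg :: "'a::euclidean_space set \<Rightarrow> 'a set" where
  "Reg X = {p\<in>X. \<exists>V f. p \<in> V \<and> ldf X V f}"

text \<open>Critical points of the projection restricted to Reg X: the differential
  T_p X = ker Df(p) \<rightarrow> R^(n-1) of fst is not surjective.\<close>
definition crit_pt :: "('b::euclidean_space \<times> real) set \<Rightarrow> 'b \<times> real \<Rightarrow> bool" where
  "crit_pt X p \<longleftrightarrow> p \<in> Reg X \<and>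
     (\<exists>V f D. p \<in> V \<and> ldf X V f \<and> (f has_derivative D) (at p) \<and>
        fst ` {v. D v = 0} \<noteq> UNIV)"

definition discr :: "('b::euclidean_space \<times> real) set \<Rightarrow> 'b set" where
  "discr X = fst ` (X - Reg X) \<union> fst ` {p. crit_pt X p}"

definition finite_proj :: "('b \<times> real) set \<Rightarrow> bool" where
  "finite_proj X \<longleftrightarrow> (\<forall>y. finite {x\<in>X. fst x = y})"

definition cone_at :: "('b::real_normed_vector \<times> real) \<Rightarrow> real \<Rightarrow> ('b \<times> real) set" where
  "cone_at x0 \<epsilon> = {x0 + l *\<^sub>R (\<eta>, 1) | \<eta> l. norm \<eta> < \<epsilon> \<and> l \<noteq> 0}"

definition ce_regular :: "real \<Rightarrow> real \<Rightarrow> ('b::euclidean_space \<times> real) \<Rightarrow> ('b \<times> real) set \<Rightarrow> bool" where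
  "ce_regular C \<epsilon> x0 X \<longleftrightarrow> finite_proj X \<and>
     (\<exists>(k::nat) (lam :: nat \<Rightarrow> 'b \<Rightarrow> real).
        (\<forall>i<k. ranalytic_on (lam i) (ball 0 \<epsilon>) \<and> (\<forall>\<eta>\<in>ball 0 \<epsilon>. lam i \<eta> \<noteq> 0) \<and>
            (\<forall>\<eta>\<in>ball 0 \<epsilon>. \<exists>g. (lam i has_derivative (\<lambda>h. g \<bullet> h)) (at \<eta>) \<and>
                                norm g \<le> C * \<bar>lam i \<eta>\<bar>)) \<and>
        (\<forall>i<k. \<forall>j<k. i \<noteq> j \<longrightarrow>
            {x0 + lam i \<eta> *\<^sub>R (\<eta>, 1) | \<eta>. norm \<eta> < \<epsilon>} \<inter>
            {x0 + lam j \<eta> *\<^sub>R (\<eta>, 1) | \<eta>. norm \<eta> < \<epsilon>} = {}) \<and>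
        X \<inter> cone_at x0 \<epsilon> = (\<Union>i<k. {x0 + lam i \<eta> *\<^sub>R (\<eta>, 1) | \<eta>. norm \<eta> < \<epsilon>}))"

end

theory Submission
  imports Defs
begin

lemma monom_bound:
  fixes h h0 :: "'a::euclidean_space"
  assumes al: "\<alpha> \<in> mindex" "\<alpha> \<noteq> (\<lambda>_. 0)"
    and d: "0 \<le> \<delta>" "\<delta> \<le> 1" and rho: "0 \<le> \<rho>"
    and hb: "\<And>b. b \<in> Basis \<Longrightarrow> \<bar>h \<bullet> b\<bar> \<le> \<delta> * \<rho>"
    and h0b: "\<And>b. b \<in> Basis \<Longrightarrow> h0 \<bullet> b = \<rho>"
  shows "\<bar>monom \<alpha> h\<bar> \<le> \<delta> * monom \<alpha> h0"
proof -
  obtain b0 where b0: "\<alpha> b0 \<noteq> 0" using al(2) by auto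
  have b0B: "b0 \<in> Basis" using al(1) b0 unfolding mindex_def by auto
  have "\<bar>monom \<alpha> h\<bar> = (\<Prod>b\<in>Basis. \<bar>h \<bullet> b\<bar> ^ \<alpha> b)"
    unfolding monom_def by (simp add: abs_prod power_abs)
  also have "\<dots> \<le> (\<Prod>b\<in>Basis. (\<delta> * \<rho>) ^ \<alpha> b)"
    by (rule prod_mono) (auto intro: power_mono hb)
  also have "\<dots> = (\<Prod>b\<in>Basis. \<delta> ^ \<alpha> b) * (\<Prod>b\<in>Basis. \<rho> ^ \<alpha> b)"
    by (simp add: power_mult_distrib prod.distrib)
  also have "(\<Prod>b\<in>Basis. \<rho> ^ \<alpha> b) = monom \<alpha> h0"
    unfolding monom_def by (simp add: h0b)
  also have "(\<Prod>b\<in>Basis. \<delta> ^ \<alpha> b) \<le> \<delta>"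
  proof -
    have "(\<Prod>b\<in>Basis. \<delta> ^ \<alpha> b) = \<delta> ^ \<alpha> b0 * (\<Prod>b\<in>Basis - {b0}. \<delta> ^ \<alpha> b)"
      using b0B by (simp add: prod.remove)
    also have "\<dots> \<le> \<delta> ^ \<alpha> b0 * 1"
      by (rule mult_left_mono) (auto intro!: prod_le_1 simp: d power_le_one)
    also have "\<dots> \<le> \<delta>" using b0 d
      by (simp add: power_le_one) (metis One_nat_def Suc_leI bot_nat_0.not_eq_extremum power_decreasing power_one_right)
    finally show ?thesis .
  qed
  ultimately show ?thesis
    by (smt (verit, ccfv_SIG) h0b monom_def mult_right_mono prod_nonneg rho zero_le_power)
qed


lemma ranalytic_isCont:
  fixes f :: "'a::euclidean_space \<Rightarrow> real"
  assumes "ranalytic_at f a"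
  shows "isCont f a"
proof -
  obtain r c where r: "r > 0" and hs: "\<And>x. x \<in> ball a r \<Longrightarrow>
      ((\<lambda>\<alpha>. c \<alpha> * monom \<alpha> (x - a)) has_sum f x) mindex"
    using assms unfolding ranalytic_at_def by blast
  define \<rho> where "\<rho> = r / (2 * DIM('a))"
  have rho: "\<rho> > 0" using r by (simp add: \<rho>_def)
  define h0 where "h0 = (\<Sum>b\<in>(Basis::'a set). \<rho> *\<^sub>R b)"
  have h0b: "h0 \<bullet> b = \<rho>" if "b \<in> Basis" for b
    using that by (simp add: h0_def inner_sum_left inner_Basis if_distrib sum.delta cong: if_cong)
  have "norm h0 \<le> (\<Sum>b\<in>(Basis::'a set). norm (\<rho> *\<^sub>R b))"
    unfolding h0_def by (rule norm_sum[of "\<lambda>b. \<rho> *\<^sub>R b"])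
  also have "\<dots> = DIM('a) * \<rho>" using rho by simp
  also have "\<dots> < r" using r by (simp add: \<rho>_def)
  finally have "a + h0 \<in> ball a r" by (simp add: dist_norm)
  from hs[OF this] have "((\<lambda>\<alpha>. c \<alpha> * monom \<alpha> h0) has_sum f (a + h0)) mindex"
    by simp
  hence "(\<lambda>\<alpha>. c \<alpha> * monom \<alpha> h0) summable_on mindex"
    unfolding summable_on_def by (rule exI)
  hence s1: "(\<lambda>\<alpha>. norm (c \<alpha> * monom \<alpha> h0)) summable_on mindex"
    by (rule summable_on_iff_abs_summable_on_real[THEN iffD1])
  have mpos: "monom \<alpha> h0 \<ge> 0" for \<alpha>
    unfolding monom_def using rho by (auto intro!: prod_nonneg simp: h0b)
  have "(\<lambda>\<alpha>. norm (c \<alpha> * monom \<alpha> h0)) = (\<lambda>\<alpha>. \<bar>c \<alpha>\<bar> * monom \<alpha> h0)"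
    by (rule ext) (simp only: real_norm_def abs_mult abs_of_nonneg[OF mpos])
  with s1 have msum: "(\<lambda>\<alpha>. \<bar>c \<alpha>\<bar> * monom \<alpha> h0) summable_on mindex"
    by simp
  define M where "M = infsum (\<lambda>\<alpha>. \<bar>c \<alpha>\<bar> * monom \<alpha> h0) mindex"
  have M0: "M \<ge> 0" unfolding M_def
    by (rule infsum_nonneg) (simp add: mpos)
  have Mhs: "((\<lambda>\<alpha>. \<bar>c \<alpha>\<bar> * monom \<alpha> h0) has_sum M) mindex"
    using msum M_def by simp
  have main: "\<bar>f x - f a\<bar> \<le> \<delta> * M" if d: "0 \<le> \<delta>" "\<delta> \<le> 1" and x: "norm (x - a) \<le> \<delta> * \<rho>" for x \<delta>
  proof -
    have "\<delta> * \<rho> \<le> \<rho>" using d rho by (simp add: mult_left_le_one_le)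
    also have "\<rho> \<le> DIM('a) * \<rho>" using rho by (simp add: Suc_leI)
    finally have "norm (x - a) < r" using x \<open>DIM('a) * \<rho> < r\<close> by linarith
    hence xb: "x \<in> ball a r" by (simp add: dist_norm norm_minus_commute)
    have ab: "a \<in> ball a r" using r by simp
    have hd: "((\<lambda>\<alpha>. c \<alpha> * monom \<alpha> (x - a) - c \<alpha> * monom \<alpha> (a - a)) has_sum (f x - f a)) mindex"
    proof -
      have hn: "((\<lambda>\<alpha>. - (c \<alpha> * monom \<alpha> (a - a))) has_sum (- f a)) mindex"
        using hs[OF ab] by (simp add: has_sum_uminus)
      show ?thesis using has_sum_add[OF hs[OF xb] hn] by simp
    qed
    have "norm (f x - f a) \<le> \<delta> * M"
    proof (rule norm_infsum_le[OF hd has_sum_cmult_right[OF Mhs]])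
      fix \<alpha> :: "'a \<Rightarrow> nat" assume al: "\<alpha> \<in> mindex"
      show "norm (c \<alpha> * monom \<alpha> (x - a) - c \<alpha> * monom \<alpha> (a - a)) \<le> \<delta> * (\<bar>c \<alpha>\<bar> * monom \<alpha> h0)"
      proof (cases "\<alpha> = (\<lambda>_. 0)")
        case True
        then show ?thesis using d \<open>monom \<alpha> h0 \<ge> 0\<close> by (simp add: monom_def)
      next
        case False
        obtain b0 where b0: "\<alpha> b0 \<noteq> 0" using False by auto
        have b0B: "b0 \<in> Basis" using al b0 unfolding mindex_def by auto
        have m0: "monom \<alpha> (a - a) = 0" unfolding monom_def
          using b0 b0B by (auto intro!: prod_zero)
        have "\<bar>monom \<alpha> (x - a)\<bar> \<le> \<delta> * monom \<alpha> h0"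
          by (rule monom_bound[OF al False d rho[THEN less_imp_le]])
             (auto intro: order_trans[OF Basis_le_norm x] h0b)
        then show ?thesis using m0
          by (simp add: abs_mult) (metis abs_ge_zero mult.left_commute mult_left_mono)
      qed
    qed
    thus ?thesis by simp
  qed
  show ?thesis unfolding continuous_at_eps_delta
  proof (intro allI impI)
    fix e :: real assume e: "e > 0"
    define \<delta> where "\<delta> = min 1 (e / (2 * (M + 1)))"
    have d: "0 < \<delta>" "\<delta> \<le> 1" "\<delta> \<le> e / (2 * (M + 1))" using e M0 by (auto simp: \<delta>_def)
    have dM: "\<delta> * M < e"
    proof -
      have "\<delta> * M \<le> e / (2 * (M + 1)) * M" using mult_right_mono[OF d(3) M0] .
      also have "\<dots> < e" using e M0 by (simp add: field_simps) (smt (verit) mult_nonneg_nonneg)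
      finally show ?thesis .
    qed
    show "\<exists>d>0. \<forall>x'. dist x' a < d \<longrightarrow> dist (f x') (f a) < e"
    proof (intro exI[of _ "\<delta> * \<rho>"] conjI allI impI)
      show "\<delta> * \<rho> > 0" using d rho by simp
      fix x' assume "dist x' a < \<delta> * \<rho>"
      hence "norm (x' - a) \<le> \<delta> * \<rho>" by (simp add: dist_norm)
      from main[OF _ _ this] d dM show "dist (f x') (f a) < e" by (simp add: dist_real_def)
    qed
  qed
qed


lemma closure_below:
  fixes g :: "'a::metric_space \<Rightarrow> real"
  assumes g: "isCont g y" and p: "(y, t) \<in> closure S" and S: "\<And>y' t'. (y', t') \<in> S \<Longrightarrow> g y' < t'"
  shows "g y \<le> t"
proof (rule ccontr)
  assume "\<not> g y \<le> t"
  define gap where "gap = g y - t"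
  have gap: "gap > 0" using \<open>\<not> g y \<le> t\<close> by (simp add: gap_def)
  obtain d where d: "d > 0" "\<And>y'. dist y' y < d \<Longrightarrow> dist (g y') (g y) < gap / 2"
    using g gap unfolding continuous_at_eps_delta by (meson half_gt_zero)
  obtain x where x: "x \<in> S" "dist x (y, t) < min d (gap / 2)"
    using p d gap unfolding closure_approachable by (metis half_gt_zero min_less_iff_conj)
  obtain y' t' where xe: "x = (y', t')" by (cases x)
  have "dist y' y < d" using dist_fst_le[of x "(y,t)"] x xe by simp
  hence "dist (g y') (g y) < gap / 2" by (rule d(2))
  moreover have "dist t' t < gap / 2" using dist_snd_le[of x "(y,t)"] x xe by simp
  moreover have "g y' < t'" using S x xe by simp
  ultimately have A: "\<bar>g y' - g y\<bar> < gap / 2" "\<bar>t' - t\<bar> < gap / 2" "g y' < t'"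
    by (auto simp: dist_real_def)
  have "g y - g y' < gap / 2" "t' - t < gap / 2"
    using A(1,2) abs_ge_self[of "g y - g y'"] abs_minus_commute[of "g y" "g y'"] abs_ge_self[of "t' - t"]
    by auto
  then show False using A(3) unfolding gap_def by (simp add: field_simps)
qed

lemma closure_above:
  fixes g :: "'a::metric_space \<Rightarrow> real"
  assumes g: "isCont g y" and p: "(y, t) \<in> closure S" and S: "\<And>y' t'. (y', t') \<in> S \<Longrightarrow> t' < g y'"
  shows "t \<le> g y"
proof (rule ccontr)
  assume "\<not> t \<le> g y"
  define gap where "gap = t - g y"
  have gap: "gap > 0" using \<open>\<not> t \<le> g y\<close> by (simp add: gap_def)
  obtain d where d: "d > 0" "\<And>y'. dist y' y < d \<Longrightarrow> dist (g y') (g y) < gap / 2"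
    using g gap unfolding continuous_at_eps_delta by (meson half_gt_zero)
  obtain x where x: "x \<in> S" "dist x (y, t) < min d (gap / 2)"
    using p d gap unfolding closure_approachable by (metis half_gt_zero min_less_iff_conj)
  obtain y' t' where xe: "x = (y', t')" by (cases x)
  have "dist y' y < d" using dist_fst_le[of x "(y,t)"] x xe by simp
  hence "dist (g y') (g y) < gap / 2" by (rule d(2))
  moreover have "dist t' t < gap / 2" using dist_snd_le[of x "(y,t)"] x xe by simp
  moreover have "t' < g y'" using S x xe by simp
  ultimately have A: "\<bar>g y' - g y\<bar> < gap / 2" "\<bar>t' - t\<bar> < gap / 2" "t' < g y'"
    by (auto simp: dist_real_def)
  have "g y' - g y < gap / 2" "t - t' < gap / 2"
    using A(1,2) abs_ge_self[of "g y' - g y"] abs_minus_commute[of "t" "t'"] abs_ge_self[of "t - t'"]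
    by auto
  then show False using A(3) unfolding gap_def by (simp add: field_simps)
qed

theorem lemma1:
  fixes U :: "((real^'m) \<times> real) set" and U' :: "(real^'m) set"
    and x0 :: "(real^'m) \<times> real" and C \<epsilon> Ct :: real
    and k i :: nat and \<phi> :: "nat \<Rightarrow> real^'m \<Rightarrow> real"
  defines "X \<equiv> closure U - U"
  defines "U0' \<equiv> connected_component_set U' (fst x0)"
  defines "U1 \<equiv> {(y, t). y \<in> U0' \<and> \<phi> i y < t \<and> t < \<phi> (Suc i) y}"
  assumes U: "open U" "bounded U" "subanalytic U"
    and fin: "finite_proj X"
    and C: "C > 0" and eps: "\<epsilon> > 0" and x0: "x0 \<in> U"
    and reg: "ce_regular C \<epsilon> x0 X"
    and Ct: "Ct \<ge> 1"
    and h1: "infdist x0 (X - cone_at x0 \<epsilon>) \<le> Ct * infdist (fst x0) (fst ` (X - cone_at x0 \<epsilon>))"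
    and h2: "Ct * infdist (fst x0) (fst ` (X - cone_at x0 \<epsilon>)) \<le> Ct * infdist (fst x0) (discr X)"
    and U': "open U'" "subanalytic U'" "U' \<subseteq> fst ` U - discr X" "fst x0 \<in> U'"
    and h3: "infdist (fst x0) (discr X) \<le> Ct * infdist (fst x0) (closure U' - U')"
    and cyl_an: "\<forall>j<k. ranalytic_on (\<phi> j) U0' \<and> bounded (\<phi> j ` U0')"
    and cyl_ord: "\<forall>j. Suc j < k \<longrightarrow> (\<forall>y\<in>U0'. \<phi> j y < \<phi> (Suc j) y)"
    and cyl_graph: "X \<inter> fst -` U0' = (\<Union>j<k. {(y, \<phi> j y) | y. y \<in> U0'})"
    and i: "Suc i < k" and x0U1: "x0 \<in> U1"
  shows "infdist x0 X \<le> Ct\<^sup>2 * infdist x0 (closure U1 - U1)"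
proof -
  define y0 where "y0 = fst x0"
  define t0 where "t0 = snd x0"
  have x0e: "x0 = (y0, t0)" by (simp add: y0_def t0_def)
  have y0U0: "y0 \<in> U0'" and t0b: "\<phi> i y0 < t0" "t0 < \<phi> (Suc i) y0"
    using x0U1 unfolding U1_def x0e by auto
  have U0sub: "U0' \<subseteq> U'" unfolding U0'_def by (rule connected_component_subset)
  have U0open: "open U0'" unfolding U0'_def by (rule open_connected_component[OF U'(1)])
  have Ct2: "Ct\<^sup>2 \<ge> 1" using Ct by (simp add: one_le_power)
  define D where "D = infdist x0 X"
  have D0: "D \<ge> 0" unfolding D_def by (rule infdist_nonneg)
  have XC: "X - cone_at x0 \<epsilon> \<noteq> {}"
  proof -
    obtain k0 :: 'm where True by auto
    define v :: "(real^'m) \<times> real" where "v = (axis k0 1, 0)"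
    have nv: "norm v = 1" by (simp add: v_def norm_Pair)
    define S where "S = (\<lambda>s::real. x0 + s *\<^sub>R v) ` {0..}"
    have cS: "connected S" unfolding S_def
      by (rule connected_continuous_image) (auto intro!: continuous_intros)
    have "x0 \<in> S" unfolding S_def by (rule image_eqI[of _ _ 0]) auto
    hence S1: "S \<inter> U \<noteq> {}" using x0 by blast
    obtain B where B: "\<And>x. x \<in> U \<Longrightarrow> norm x \<le> B" using U(2) bounded_iff by blast
    define s where "s = \<bar>B\<bar> + norm x0 + 1"
    define q where "q = x0 + s *\<^sub>R v"
    have "q \<in> S" unfolding S_def q_def s_def by (rule imageI) simp
    have "s = norm (q - x0)" using nv by (simp add: q_def s_def)
    also have "\<dots> \<le> norm q + norm x0" by (rule norm_triangle_ineq4)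
    finally have "norm q > B" unfolding s_def by linarith
    hence "q \<notin> U" using B by (meson not_le)
    hence S2: "S - U \<noteq> {}" using \<open>q \<in> S\<close> by blast
    obtain q' where q': "q' \<in> S" "q' \<in> frontier U"
      using connected_Int_frontier[OF cS S1 S2] by blast
    have q'X: "q' \<in> X" using q'(2) U(1) by (simp add: X_def frontier_def interior_open)
    obtain s' where s': "q' = x0 + s' *\<^sub>R v" using q'(1) unfolding S_def by blast
    have "q' \<notin> cone_at x0 \<epsilon>"
    proof
      assume "q' \<in> cone_at x0 \<epsilon>"
      then obtain \<eta> l where "q' = x0 + l *\<^sub>R (\<eta>, 1)" "l \<noteq> 0"
        unfolding cone_at_def by blast
      then show False using s' by (simp add: v_def)
    qed
    with q'X show ?thesis by blast
  qed
  have stepA: "D \<le> Ct\<^sup>2 * infdist y0 (closure U' - U')"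
  proof -
    have "D \<le> infdist x0 (X - cone_at x0 \<epsilon>)"
      unfolding D_def by (rule infdist_mono[OF _ XC]) auto
    also have "\<dots> \<le> Ct * infdist y0 (discr X)" using h1 h2 by (simp add: y0_def)
    also have "\<dots> \<le> Ct * (Ct * infdist y0 (closure U' - U'))"
      using h3 Ct by (simp add: y0_def)
    finally show ?thesis by (simp add: power2_eq_square mult.assoc)
  qed
  have Bne: "closure U1 - U1 \<noteq> {}"
  proof -
    have "(y0, \<phi> i y0) \<in> closure U1"
      unfolding closure_approachable
    proof (intro allI impI)
      fix e :: real assume e: "e > 0"
      define s where "s = min (e / 2) ((\<phi> (Suc i) y0 - \<phi> i y0) / 2)"
      have s12: "s \<le> (\<phi> (Suc i) y0 - \<phi> i y0) / 2" "s \<le> e / 2" unfolding s_def by (rule min.cobounded2, rule min.cobounded1)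
      have s: "s > 0" "s < e" "\<phi> i y0 + s < \<phi> (Suc i) y0"
        using e t0b s12 by (auto simp: s_def)
      have "(y0, \<phi> i y0 + s) \<in> U1" unfolding U1_def using y0U0 s by auto
      moreover have "dist (y0, \<phi> i y0 + s) (y0, \<phi> i y0) < e"
        using s by (simp add: dist_Pair_Pair dist_real_def)
      ultimately show "\<exists>x\<in>U1. dist x (y0, \<phi> i y0) < e" by blast
    qed
    moreover have "(y0, \<phi> i y0) \<notin> U1" unfolding U1_def by auto
    ultimately show ?thesis by blast
  qed
  have stepC: "D \<le> Ct\<^sup>2 * dist x0 p" if p: "p \<in> closure U1 - U1" for p
  proof -
    obtain y t where pe: "p = (y, t)" by (cases p)
    have "U1 \<subseteq> U0' \<times> UNIV" unfolding U1_def by auto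
    hence "closure U1 \<subseteq> closure U0' \<times> UNIV"
      by (metis closure_UNIV closure_Times closure_mono)
    hence yc: "y \<in> closure U0'" using p pe by auto
    show ?thesis
    proof (cases "y \<in> U0'")
      case False
      have "frontier U0' \<subseteq> frontier U'"
        unfolding U0'_def by (rule frontier_of_connected_component_subset)
      hence "y \<in> closure U' - U'"
        using yc False U0open U'(1) by (auto simp: frontier_def interior_open)
      hence "infdist y0 (closure U' - U') \<le> dist y0 y" by (rule infdist_le)
      also have "\<dots> \<le> dist x0 p" using dist_fst_le[of x0 p] by (simp add: pe y0_def)
      finally show ?thesis using stepA Ct2
        by (smt (verit, ccfv_SIG) mult_left_mono)
    next
      case True
      have c1: "isCont (\<phi> i) y" and c2: "isCont (\<phi> (Suc i)) y"
        using cyl_an i True by (auto simp: ranalytic_on_def intro!: ranalytic_isCont)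
      have "(y, t) \<in> closure U1" using p pe by simp
      have lo: "\<phi> i y \<le> t"
        by (rule closure_below[OF c1 \<open>(y, t) \<in> closure U1\<close>]) (auto simp: U1_def)
      have hi: "t \<le> \<phi> (Suc i) y"
        by (rule closure_above[OF c2 \<open>(y, t) \<in> closure U1\<close>]) (auto simp: U1_def)
      have "p \<notin> U1" using p by simp
      hence "t = \<phi> i y \<or> t = \<phi> (Suc i) y" using lo hi True unfolding pe U1_def by auto
      hence "p \<in> X \<inter> fst -` U0'" unfolding cyl_graph using i True pe by auto
      hence "D \<le> dist x0 p" unfolding D_def by (auto intro: infdist_le)
      also have "\<dots> \<le> Ct\<^sup>2 * dist x0 p" using Ct2 by (simp add: mult_le_cancel_right1)
      finally show ?thesis .
    qed
  qed
  have Ctp: "Ct\<^sup>2 > 0" using Ct by simp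
  have "D / Ct\<^sup>2 \<le> infdist x0 (closure U1 - U1)"
    unfolding infdist_notempty[OF Bne]
  proof (rule cINF_greatest[OF Bne])
    fix p assume "p \<in> closure U1 - U1"
    from stepC[OF this] Ctp show "D / Ct\<^sup>2 \<le> dist x0 p" by (simp add: divide_le_eq mult.commute)
  qed
  thus ?thesis using Ctp unfolding D_def by (simp add: divide_le_eq mult.commute)
qed

end
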